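(* Let $B$ be a Banach left $A$-module, and let $(e_\alpha)_\alpha\subseteq A$ be a bounded left approximate identity for $A$ with $e_\alpha\to e''$ weak$^*$ in $A^{**}$, where $e''$ is a left unit of $A^{**}$ for the first Arens product. Suppose $Z^t_{e''}(B^{**})=B^{**}$. Then $AB=B$ (i.e. every $b\in B$ can be written $b=ax$ with $a\in A$, $x\in B$) if and only if $\pi_\ell^{***}(e'',b'')=b''$ for all $b''\in B^{**}$.
   Context: $A$ is a Banach algebra, $B$ a Banach left $A$-module with action $\pi_\ell(a,b)=ab$. A bounded left approximate identity for $A$ is a bounded net $(e_\alpha)\subseteq A$ with $e_\alpha a\to a$ for all $a\in A$. For a bounded bilinear $m:X\times Y\to Z$: $m^*:Z^*\times X\to Y^*$, $\langle m^*(z',x),y\rangle=\langle z',m(x,y)\rangle$; $m^{**}:Y^{**}\times Z^*\to X^*$, $\langle m^{**}(y'',z'),x\rangle=\langle y'',m^*(z',x)\rangle$; $m^{***}:X^{**}\times Y^{**}\to Z^{**}$, $\langle m^{***}(x'',y''),z'\rangle=\langle x'',m^{**}(y'',z')\rangle$; $m^t(y,x)=m(x,y)$ and $m^{t***t}(x'',y'')=(m^t)^{***}(y'',x'')$. The first Arens product on $A^{**}$ is $m^{***}$ for $m$ the multiplication of $A$. For $a''\in A^{**}$, $Z^t_{a''}(B^{**})=\{b''\in B^{**}:\pi_\ell^{t***t}(a'',b'')=\pi_\ell^{***}(a'',b'')\}$. *)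

theory Defs
  imports "HOL-Analysis.Analysis"
begin

definition arens1 :: "('x::real_normed_vector \<Rightarrow> 'y::real_normed_vector \<Rightarrow> 'z::real_normed_vector)
    \<Rightarrow> ('z \<Rightarrow>\<^sub>L real) \<Rightarrow> 'x \<Rightarrow> ('y \<Rightarrow>\<^sub>L real)" where
  "arens1 m z' x = Blinfun (\<lambda>y. blinfun_apply z' (m x y))"

definition arens2 :: "('x::real_normed_vector \<Rightarrow> 'y::real_normed_vector \<Rightarrow> 'z::real_normed_vector)
    \<Rightarrow> (('y \<Rightarrow>\<^sub>L real) \<Rightarrow>\<^sub>L real) \<Rightarrow> ('z \<Rightarrow>\<^sub>L real) \<Rightarrow> ('x \<Rightarrow>\<^sub>L real)" where
  "arens2 m y'' z' = Blinfun (\<lambda>x. blinfun_apply y'' (arens1 m z' x))"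

definition arens3 :: "('x::real_normed_vector \<Rightarrow> 'y::real_normed_vector \<Rightarrow> 'z::real_normed_vector)
    \<Rightarrow> (('x \<Rightarrow>\<^sub>L real) \<Rightarrow>\<^sub>L real) \<Rightarrow> (('y \<Rightarrow>\<^sub>L real) \<Rightarrow>\<^sub>L real) \<Rightarrow> (('z \<Rightarrow>\<^sub>L real) \<Rightarrow>\<^sub>L real)" where
  "arens3 m x'' y'' = Blinfun (\<lambda>z'. blinfun_apply x'' (arens2 m y'' z'))"

(* m^t (y,x) = m (x,y);  m^{t***t}(x'',y'') = (m^t)^{***}(y'',x''). *)
definition transp_bil :: "('x \<Rightarrow> 'y \<Rightarrow> 'z) \<Rightarrow> 'y \<Rightarrow> 'x \<Rightarrow> 'z" where
  "transp_bil m y x = m x y"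

definition arens3t :: "('x::real_normed_vector \<Rightarrow> 'y::real_normed_vector \<Rightarrow> 'z::real_normed_vector)
    \<Rightarrow> (('x \<Rightarrow>\<^sub>L real) \<Rightarrow>\<^sub>L real) \<Rightarrow> (('y \<Rightarrow>\<^sub>L real) \<Rightarrow>\<^sub>L real) \<Rightarrow> (('z \<Rightarrow>\<^sub>L real) \<Rightarrow>\<^sub>L real)" where
  "arens3t m x'' y'' = arens3 (transp_bil m) y'' x''"

definition banach_left_module :: "('a::{real_normed_algebra,banach} \<Rightarrow> 'b::banach \<Rightarrow> 'b) \<Rightarrow> bool" where
  "banach_left_module act \<longleftrightarrow> bounded_bilinear act \<and> (\<forall>a c x. act (a * c) x = act a (act c x))"

definition Zt :: "('a::real_normed_vector \<Rightarrow> 'b::real_normed_vector \<Rightarrow> 'b)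
    \<Rightarrow> (('a \<Rightarrow>\<^sub>L real) \<Rightarrow>\<^sub>L real) \<Rightarrow> (('b \<Rightarrow>\<^sub>L real) \<Rightarrow>\<^sub>L real) set" where
  "Zt act a'' = {b''. arens3t act a'' b'' = arens3 act a'' b''}"

(* Nets: a net indexed by 'i along a proper filter F (directed-set nets are the
  special case of the section filter of a directed set). *)
definition bounded_left_approx_identity :: "('i \<Rightarrow> 'a::{real_normed_algebra,banach}) \<Rightarrow> 'i filter \<Rightarrow> bool" where
  "bounded_left_approx_identity e F \<longleftrightarrow> F \<noteq> bot \<and> (\<exists>M. \<forall>i. norm (e i) \<le> M)
     \<and> (\<forall>a. ((\<lambda>i. e i * a) \<longlongrightarrow> a) F)"

definition weak_star_conv_bidual :: "('i \<Rightarrow> 'x::real_normed_vector) \<Rightarrow> (('x \<Rightarrow>\<^sub>L real) \<Rightarrow>\<^sub>L real) \<Rightarrow> 'i filter \<Rightarrow> bool" where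
  "weak_star_conv_bidual e x'' F \<longleftrightarrow> (\<forall>f::'x \<Rightarrow>\<^sub>L real. ((\<lambda>i. blinfun_apply f (e i)) \<longlongrightarrow> blinfun_apply x'' f) F)"

end

theory Submission
  imports Defs
begin


definition hbok :: "('b::real_normed_vector \<times> real) set \<Rightarrow> ('b \<times> real) set \<Rightarrow> bool" where
 "hbok G0 G \<longleftrightarrow> G0 \<subseteq> G \<and> (\<forall>x a y b. (x,a)\<in>G \<longrightarrow> (y,b)\<in>G \<longrightarrow> (x+y,a+b)\<in>G)
   \<and> (\<forall>x a r. (x,a)\<in>G \<longrightarrow> (r *\<^sub>R x, r*a)\<in>G) \<and> (\<forall>x a. (x,a)\<in>G \<longrightarrow> a \<le> norm x)"

lemma hbokD:
  assumes "hbok G0 G"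
  shows "G0 \<subseteq> G" "(x,a)\<in>G \<Longrightarrow> (y,b)\<in>G \<Longrightarrow> (x+y,a+b)\<in>G"
    "(x,a)\<in>G \<Longrightarrow> (r *\<^sub>R x, r*a)\<in>G" "(x,a)\<in>G \<Longrightarrow> a \<le> norm x"
  using assms unfolding hbok_def by blast+

lemma hbok_uniq:
  assumes "hbok G0 G" "(x,a)\<in>G" "(x,b)\<in>G" shows "a = b"
proof -
  have "((-1) *\<^sub>R x, (-1)*b) \<in> G" using assms unfolding hbok_def by blast
  hence "(x + (-1) *\<^sub>R x, a + (-1)*b) \<in> G" using assms unfolding hbok_def by blast
  hence 1: "a - b \<le> 0" using assms(1) unfolding hbok_def by fastforce
  have "((-1) *\<^sub>R x, (-1)*a) \<in> G" using assms unfolding hbok_def by blast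
  hence "(x + (-1) *\<^sub>R x, b + (-1)*a) \<in> G" using assms unfolding hbok_def by blast
  hence 2: "b - a \<le> 0" using assms(1) unfolding hbok_def by fastforce
  from 1 2 show ?thesis by simp
qed

lemma hb_ext:
  fixes G0 :: "('b::real_normed_vector \<times> real) set"
  assumes ok0: "hbok G0 G0" and ne: "G0 \<noteq> {}"
  shows "\<exists>f::'b\<Rightarrow>real. bounded_linear f \<and> (\<forall>x a. (x,a)\<in>G0 \<longrightarrow> f x = a)"
proof -
  let ?A = "{G. hbok G0 G}"
  have "\<forall>C\<in>chains ?A. \<exists>U\<in>?A. \<forall>X\<in>C. X \<subseteq> U"
  proof
    fix C assume C: "C \<in> chains ?A"
    show "\<exists>U\<in>?A. \<forall>X\<in>C. X \<subseteq> U"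
    proof (cases "C = {}")
      case True thus ?thesis using ok0 by auto
    next
      case False
      then obtain X0 where X0: "X0 \<in> C" by auto
      have sub: "\<And>X. X \<in> C \<Longrightarrow> hbok G0 X" and ch: "\<And>X Y. X\<in>C \<Longrightarrow> Y\<in>C \<Longrightarrow> X \<subseteq> Y \<or> Y \<subseteq> X"
        using C by (auto simp: chains_def chain_subset_def)
      have "hbok G0 (\<Union>C)"
        unfolding hbok_def
      proof (intro conjI allI impI)
        show "G0 \<subseteq> \<Union>C" using X0 hbokD(1)[OF sub[OF X0]] by auto
      next
        fix x a y b assume "(x,a) \<in> \<Union>C" "(y,b) \<in> \<Union>C"
        then obtain X Y where XY: "X\<in>C" "Y\<in>C" "(x,a)\<in>X" "(y,b)\<in>Y" by auto
        show "(x+y,a+b) \<in> \<Union>C"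
        proof (cases "X \<subseteq> Y")
          case True
          hence "(x+y,a+b) \<in> Y" using XY hbokD(2)[OF sub[OF XY(2)]] by auto
          thus ?thesis using XY by auto
        next
          case False hence "Y \<subseteq> X" using ch XY by blast
          hence "(x+y,a+b) \<in> X" using XY hbokD(2)[OF sub[OF XY(1)]] by auto
          thus ?thesis using XY by auto
        qed
      next
        fix x a r assume "(x,a) \<in> \<Union>C"
        then obtain X where "X \<in> C" "(x,a)\<in>X" by auto
        thus "(r *\<^sub>R x, r*a) \<in> \<Union>C" using hbokD(3)[OF sub] by blast
      next
        fix x a assume "(x,a) \<in> \<Union>C"
        then obtain X where "X \<in> C" "(x,a)\<in>X" by auto
        thus "a \<le> norm x" using hbokD(4)[OF sub] by blast
      qed
      thus ?thesis by auto
    qed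
  qed
  from Zorn_Lemma2[OF this] obtain M where M: "hbok G0 M" and maxM: "\<And>X. hbok G0 X \<Longrightarrow> M \<subseteq> X \<Longrightarrow> X = M"
    by blast
  note Madd = hbokD(2)[OF M] and Msc = hbokD(3)[OF M] and Mb = hbokD(4)[OF M] and G0M = hbokD(1)[OF M]
  obtain p0 where "p0 \<in> G0" using ne by auto
  hence "p0 \<in> M" using G0M by auto
  hence M00: "(0,0) \<in> M" using Msc[of "fst p0" "snd p0" 0] by auto
  have total: "\<forall>x. \<exists>a. (x,a)\<in>M"
  proof (rule ccontr)
    assume "\<not> ?thesis"
    then obtain x0 where x0: "\<And>a. (x0,a) \<notin> M" by auto
    define V where "V = (\<lambda>p. snd p - norm (fst p - x0)) ` M"
    have Vne: "V \<noteq> {}" using M00 V_def by auto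
    have Vup: "\<And>w b u a. (w,b)\<in>M \<Longrightarrow> (u,a)\<in>M \<Longrightarrow> a - norm (u - x0) \<le> norm (w + x0) - b"
    proof -
      fix w b u a assume "(w,b)\<in>M" "(u,a)\<in>M"
      hence "a + b \<le> norm (u + w)" using Madd Mb by fastforce
      also have "norm (u + w) \<le> norm (u - x0) + norm (w + x0)"
        using norm_triangle_ineq[of "u - x0" "w + x0"] by simp
      finally show "a - norm (u - x0) \<le> norm (w + x0) - b" by simp
    qed
    have bdd: "bdd_above V" unfolding V_def
    proof (rule bdd_aboveI[where M="norm x0"])
      fix z assume "z \<in> (\<lambda>p. snd p - norm (fst p - x0)) ` M"
      then obtain u a where "(u,a) \<in> M" "z = a - norm (u - x0)" by auto
      thus "z \<le> norm x0" using Vup[OF M00, of u a] by simp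
    qed
    define v where "v = Sup V"
    have vle: "\<And>w b. (w,b)\<in>M \<Longrightarrow> v \<le> norm (w + x0) - b"
      unfolding v_def by (rule cSup_least[OF Vne]) (auto simp: V_def intro: Vup)
    have vge: "\<And>u a. (u,a)\<in>M \<Longrightarrow> a - norm (u - x0) \<le> v"
      unfolding v_def by (rule cSup_upper[OF _ bdd]) (force simp: V_def)
    define M' where "M' = {(p + s *\<^sub>R x0, q + s * v) | p q s. (p,q)\<in>M}"
    have "hbok G0 M'"
      unfolding hbok_def
    proof (intro conjI allI impI)
      show "G0 \<subseteq> M'"
      proof
        fix p assume "p \<in> G0"
        hence "p \<in> M" using G0M by auto
        thus "p \<in> M'" unfolding M'_def by (cases p) force
      qed
    next
      fix x a y b assume "(x,a)\<in>M'" "(y,b)\<in>M'"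
      then obtain x1 a1 t1 x2 a2 t2 where h: "(x1,a1)\<in>M" "(x2,a2)\<in>M" "x = x1 + t1 *\<^sub>R x0" "a = a1 + t1 * v"
        "y = x2 + t2 *\<^sub>R x0" "b = a2 + t2 * v" unfolding M'_def by blast
      have "(x1+x2, a1+a2) \<in> M" using Madd h by blast
      moreover have "x + y = (x1+x2) + (t1+t2) *\<^sub>R x0" "a+b = (a1+a2) + (t1+t2) * v"
        using h by (auto simp: algebra_simps)
      ultimately show "(x+y,a+b) \<in> M'" unfolding M'_def by blast
    next
      fix x a r assume "(x,a)\<in>M'"
      then obtain x1 a1 t1 where h: "(x1,a1)\<in>M" "x = x1 + t1 *\<^sub>R x0" "a = a1 + t1 * v"
        unfolding M'_def by blast
      have "(r *\<^sub>R x1, r*a1) \<in> M" using Msc h by blast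
      moreover have "r *\<^sub>R x = r *\<^sub>R x1 + (r*t1) *\<^sub>R x0" "r*a = r*a1 + (r*t1) * v"
        using h by (auto simp: algebra_simps)
      ultimately show "(r *\<^sub>R x, r*a) \<in> M'" unfolding M'_def by blast
    next
      fix x a assume "(x,a)\<in>M'"
      then obtain x1 a1 t where h: "(x1,a1)\<in>M" "x = x1 + t *\<^sub>R x0" "a = a1 + t * v"
        unfolding M'_def by blast
      show "a \<le> norm x"
      proof (cases "t = 0")
        case True thus ?thesis using h Mb by auto
      next
        case False
        have hm: "((1/t) *\<^sub>R x1, (1/t)*a1) \<in> M" using Msc h by blast
        show ?thesis
        proof (cases "t > 0")
          case True
          have "v \<le> norm ((1/t) *\<^sub>R x1 + x0) - (1/t)*a1" using vle[OF hm] .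
          hence "t * v \<le> t * norm ((1/t) *\<^sub>R x1 + x0) - a1" using True
            by (auto simp: algebra_simps dest: mult_left_mono[where c=t])
          also have "t * norm ((1/t) *\<^sub>R x1 + x0) = norm (x1 + t *\<^sub>R x0)"
          proof -
            have "t * norm ((1/t) *\<^sub>R x1 + x0) = norm (t *\<^sub>R ((1/t) *\<^sub>R x1 + x0))" using True by simp
            also have "t *\<^sub>R ((1/t) *\<^sub>R x1 + x0) = x1 + t *\<^sub>R x0" using True by (simp add: algebra_simps)
            finally show ?thesis .
          qed
          finally show ?thesis using h by simp
        next
          case False
          hence tn: "t < 0" using \<open>t \<noteq> 0\<close> by simp
          have hm2: "((-1/t) *\<^sub>R x1, (-1/t)*a1) \<in> M" using Msc h by blast
          have "(-1/t)*a1 - norm ((-1/t) *\<^sub>R x1 - x0) \<le> v" using vge[OF hm2] .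
          hence "(-t) * ((-1/t)*a1 - norm ((-1/t) *\<^sub>R x1 - x0)) \<le> (-t) * v"
            using tn by (intro mult_left_mono) auto
          moreover have "(-t) * norm ((-1/t) *\<^sub>R x1 - x0) = norm (x1 + t *\<^sub>R x0)"
          proof -
            have "(-t) * norm ((-1/t) *\<^sub>R x1 - x0) = norm ((-t) *\<^sub>R ((-1/t) *\<^sub>R x1 - x0))" using tn by simp
            also have "(-t) *\<^sub>R ((-1/t) *\<^sub>R x1 - x0) = x1 + t *\<^sub>R x0" using tn by (simp add: algebra_simps)
            finally show ?thesis .
          qed
          moreover have "(-t) * ((-1/t)*a1) = a1" using tn by simp
          ultimately show ?thesis using h by (simp add: algebra_simps)
        qed
      qed
    qed
    moreover have "M \<subseteq> M'"
    proof
      fix p assume "p \<in> M" thus "p \<in> M'" unfolding M'_def by (cases p) force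
    qed
    ultimately have "M' = M" using maxM by blast
    moreover have "(x0, v) \<in> M'" unfolding M'_def using M00 by force
    ultimately show False using x0 by auto
  qed
  define f where "f x = (SOME a. (x,a)\<in>M)" for x
  have fM: "\<And>x. (x, f x) \<in> M" unfolding f_def using total by (metis someI_ex)
  have fu: "\<And>x a. (x,a)\<in>M \<Longrightarrow> f x = a" using hbok_uniq[OF M] fM by blast
  have "bounded_linear f"
  proof (rule bounded_linear_intro[where K=1])
    fix x y show "f (x+y) = f x + f y" using fu Madd fM by blast
  next
    fix r x show "f (r *\<^sub>R x) = r *\<^sub>R f x" using fu Msc fM by fastforce
  next
    fix x
    have "f x \<le> norm x" using Mb fM by blast
    moreover have "(-1)*f x \<le> norm ((-1) *\<^sub>R x)" using Mb Msc fM by blast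
    ultimately show "norm (f x) \<le> norm x * 1" by auto
  qed
  thus ?thesis using fu G0M by blast
qed

lemma hb_sep:
  fixes M :: "'b::real_normed_vector set"
  assumes "subspace M" "y \<notin> closure M"
  shows "\<exists>f::'b\<Rightarrow>real. bounded_linear f \<and> (\<forall>m\<in>M. f m = 0) \<and> f y \<noteq> 0"
proof -
  have Mne: "M \<noteq> {}" using assms(1) subspace_0 by blast
  define d where "d = infdist y M"
  have dpos: "d > 0" using in_closure_iff_infdist_zero[OF Mne] assms(2) infdist_nonneg[of y M]
    unfolding d_def by force
  define G0 where "G0 = {(m + t *\<^sub>R y, t*d) | m t. m \<in> M}"
  have "hbok G0 G0" unfolding hbok_def
  proof (intro conjI allI impI subset_refl)
    fix x a z b assume "(x,a)\<in>G0" "(z,b)\<in>G0"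
    then obtain m1 t1 m2 t2 where h: "m1\<in>M" "m2\<in>M" "x = m1 + t1 *\<^sub>R y" "a = t1*d" "z = m2 + t2 *\<^sub>R y" "b = t2*d"
      unfolding G0_def by blast
    have "m1+m2 \<in> M" using h assms(1) subspace_add by blast
    moreover have "x + z = (m1+m2) + (t1+t2) *\<^sub>R y" "a+b = (t1+t2)*d" using h by (auto simp: algebra_simps)
    ultimately show "(x+z,a+b)\<in>G0" unfolding G0_def by blast
  next
    fix x a r assume "(x,a)\<in>G0"
    then obtain m1 t1 where h: "m1\<in>M" "x = m1 + t1 *\<^sub>R y" "a = t1*d" unfolding G0_def by blast
    have "r *\<^sub>R m1 \<in> M" using h assms(1) subspace_scale by blast
    moreover have "r *\<^sub>R x = r *\<^sub>R m1 + (r*t1) *\<^sub>R y" "r*a = (r*t1)*d" using h by (auto simp: algebra_simps)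
    ultimately show "(r *\<^sub>R x, r*a)\<in>G0" unfolding G0_def by blast
  next
    fix x a assume "(x,a)\<in>G0"
    then obtain m t where h: "m\<in>M" "x = m + t *\<^sub>R y" "a = t*d" unfolding G0_def by blast
    show "a \<le> norm x"
    proof (cases "t > 0")
      case False hence "t*d \<le> 0" using dpos by (simp add: mult_nonpos_nonneg)
      thus ?thesis using h by (metis norm_ge_zero order.trans)
    next
      case True
      have "(-(1/t)) *\<^sub>R m \<in> M" using h assms(1) subspace_scale by blast
      hence "d \<le> dist y ((-(1/t)) *\<^sub>R m)" unfolding d_def by (rule infdist_le)
      also have "dist y ((-(1/t)) *\<^sub>R m) = norm (y + (1/t) *\<^sub>R m)" by (simp add: dist_norm)
      finally have "t*d \<le> t * norm (y + (1/t) *\<^sub>R m)" using True by simp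
      also have "t * norm (y + (1/t) *\<^sub>R m) = norm (t *\<^sub>R (y + (1/t) *\<^sub>R m))" using True by simp
      also have "t *\<^sub>R (y + (1/t) *\<^sub>R m) = x" using h True by (simp add: algebra_simps)
      finally show ?thesis using h by simp
    qed
  qed
  moreover have "G0 \<noteq> {}" unfolding G0_def using assms(1) subspace_0 by blast
  ultimately obtain f where f: "bounded_linear f" "\<And>x a. (x,a)\<in>G0 \<Longrightarrow> f x = a"
    using hb_ext by blast
  have "\<forall>m\<in>M. f m = 0"
  proof
    fix m assume "m \<in> M"
    hence "(m + 0 *\<^sub>R y, 0*d) \<in> G0" unfolding G0_def by blast
    thus "f m = 0" using f(2) by simp
  qed
  moreover have "f y = d"
  proof -
    have "(0 + 1 *\<^sub>R y, 1*d) \<in> G0" unfolding G0_def using assms(1) subspace_0 by blast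
    thus ?thesis using f(2) by simp
  qed
  ultimately show ?thesis using f dpos by (intro exI[of _ f]) auto
qed



lemma ap1:
  assumes "bounded_bilinear m"
  shows "blinfun_apply (arens1 m z' x) y = blinfun_apply z' (m x y)"
proof -
  have "bounded_linear (\<lambda>y. blinfun_apply z' (m x y))"
    by (rule bounded_linear_compose[OF blinfun.bounded_linear_right bounded_bilinear.bounded_linear_right[OF assms]])
  thus ?thesis unfolding arens1_def by (simp add: bounded_linear_Blinfun_apply)
qed

lemma norm1:
  assumes "bounded_bilinear m" "\<forall>a b. norm (m a b) \<le> norm a * norm b * K" "K \<ge> 0"
  shows "norm (arens1 m z' x) \<le> norm z' * K * norm x"
proof (rule norm_blinfun_bound)
  show "0 \<le> norm z' * K * norm x" using assms by simp
next
  fix y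
  have "norm (blinfun_apply z' (m x y)) \<le> norm z' * norm (m x y)" by (rule norm_blinfun)
  also have "\<dots> \<le> norm z' * (norm x * norm y * K)" using assms by (simp add: mult_left_mono)
  finally show "norm (blinfun_apply (arens1 m z' x) y) \<le> norm z' * K * norm x * norm y"
    by (simp add: ap1[OF assms(1)] algebra_simps)
qed

lemma arens1_add_x: "bounded_bilinear m \<Longrightarrow> arens1 m z' (x1 + x2) = arens1 m z' x1 + arens1 m z' x2"
  by (rule blinfun_eqI) (simp add: plus_blinfun.rep_eq scaleR_blinfun.rep_eq ap1 bounded_bilinear.add_left blinfun.add_right)
lemma arens1_scale_x: "bounded_bilinear m \<Longrightarrow> arens1 m z' (r *\<^sub>R x) = r *\<^sub>R arens1 m z' x"
  by (rule blinfun_eqI) (simp add: plus_blinfun.rep_eq scaleR_blinfun.rep_eq ap1 bounded_bilinear.scaleR_left blinfun.scaleR_right)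
lemma arens1_add_z: "bounded_bilinear m \<Longrightarrow> arens1 m (z1 + z2) x = arens1 m z1 x + arens1 m z2 x"
  by (rule blinfun_eqI) (simp add: plus_blinfun.rep_eq scaleR_blinfun.rep_eq ap1 blinfun.add_left)
lemma arens1_scale_z: "bounded_bilinear m \<Longrightarrow> arens1 m (r *\<^sub>R z) x = r *\<^sub>R arens1 m z x"
  by (rule blinfun_eqI) (simp add: plus_blinfun.rep_eq scaleR_blinfun.rep_eq ap1)

lemma ap2:
  assumes "bounded_bilinear m"
  shows "blinfun_apply (arens2 m y'' z') x = blinfun_apply y'' (arens1 m z' x)"
proof -
  obtain K where K: "K \<ge> 0" "\<forall>a b. norm (m a b) \<le> norm a * norm b * K"
    using bounded_bilinear.nonneg_bounded[OF assms] by blast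
  have "bounded_linear (\<lambda>x. arens1 m z' x)"
  proof (rule bounded_linear_intro[where K="norm z' * K"])
    fix x show "norm (arens1 m z' x) \<le> norm x * (norm z' * K)"
      using norm1[OF assms K(2) K(1), of z' x] by (simp add: algebra_simps)
  qed (auto simp: arens1_add_x[OF assms] arens1_scale_x[OF assms])
  hence "bounded_linear (\<lambda>x. blinfun_apply y'' (arens1 m z' x))"
    by (rule bounded_linear_compose[OF blinfun.bounded_linear_right])
  thus ?thesis unfolding arens2_def by (simp add: bounded_linear_Blinfun_apply)
qed

lemma ap3:
  assumes "bounded_bilinear m"
  shows "blinfun_apply (arens3 m x'' y'') z' = blinfun_apply x'' (arens2 m y'' z')"
proof -
  obtain K where K: "K \<ge> 0" "\<forall>a b. norm (m a b) \<le> norm a * norm b * K"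
    using bounded_bilinear.nonneg_bounded[OF assms] by blast
  have n2: "norm (arens2 m y'' z') \<le> norm z' * (norm y'' * K)" for z'
  proof (rule norm_blinfun_bound)
    show "0 \<le> norm z' * (norm y'' * K)" using K by simp
  next
    fix x
    have "norm (blinfun_apply y'' (arens1 m z' x)) \<le> norm y'' * norm (arens1 m z' x)" by (rule norm_blinfun)
    also have "\<dots> \<le> norm y'' * (norm z' * K * norm x)"
      using norm1[OF assms K(2) K(1)] by (simp add: mult_left_mono)
    finally show "norm (blinfun_apply (arens2 m y'' z') x) \<le> norm z' * (norm y'' * K) * norm x"
      by (simp add: ap2[OF assms] algebra_simps)
  qed
  have "bounded_linear (\<lambda>z'. arens2 m y'' z')"
  proof (rule bounded_linear_intro[where K="norm y'' * K"])
    fix z1 z2 show "arens2 m y'' (z1 + z2) = arens2 m y'' z1 + arens2 m y'' z2"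
      by (rule blinfun_eqI) (simp add: plus_blinfun.rep_eq scaleR_blinfun.rep_eq ap2[OF assms] arens1_add_z[OF assms] blinfun.add_right)
  next
    fix r z show "arens2 m y'' (r *\<^sub>R z) = r *\<^sub>R arens2 m y'' z"
      by (rule blinfun_eqI) (simp add: plus_blinfun.rep_eq scaleR_blinfun.rep_eq ap2[OF assms] arens1_scale_z[OF assms] blinfun.scaleR_right)
  next
    fix z show "norm (arens2 m y'' z) \<le> norm z * (norm y'' * K)" by (rule n2)
  qed
  hence "bounded_linear (\<lambda>z'. blinfun_apply x'' (arens2 m y'' z'))"
    by (rule bounded_linear_compose[OF blinfun.bounded_linear_right])
  thus ?thesis unfolding arens3_def by (simp add: bounded_linear_Blinfun_apply)
qed

lemma conv_of_diffs:
  fixes f :: "nat \<Rightarrow> 'x::banach"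
  assumes "\<And>n. norm (f (Suc n) - f n) \<le> g n" "summable g"
  shows "convergent f"
proof -
  have "summable (\<lambda>n. f (Suc n) - f n)"
    by (rule summable_comparison_test[OF _ assms(2)]) (use assms(1) in auto)
  from summable_LIMSEQ[OF this] have "(\<lambda>n. f n - f 0) \<longlonglongrightarrow> (\<Sum>n. f (Suc n) - f n)"
    by (simp add: sum_lessThan_telescope)
  hence "(\<lambda>n. (f n - f 0) + f 0) \<longlonglongrightarrow> (\<Sum>n. f (Suc n) - f n) + f 0"
    by (intro tendsto_add tendsto_const)
  thus ?thesis unfolding convergent_def by auto
qed



primrec bseq :: "(nat \<Rightarrow> 'a \<Rightarrow> 'a) \<Rightarrow> real \<Rightarrow> nat \<Rightarrow> 'a::real_normed_algebra" where
  "bseq ch c 0 = 0"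
| "bseq ch c (Suc n) = (1-c) *\<^sub>R bseq ch c n + (c*(1-c)^n) *\<^sub>R ch n (bseq ch c n)
      + c *\<^sub>R (ch n (bseq ch c n) * bseq ch c n)"

primrec Qseq :: "(nat \<Rightarrow> 'b \<Rightarrow> 'b) \<Rightarrow> nat \<Rightarrow> 'b \<Rightarrow> 'b" where
  "Qseq W 0 = (\<lambda>z. z)"
| "Qseq W (Suc n) = (\<lambda>z. Qseq W n (W n z))"

lemma cohen:
  fixes act :: "'a::{real_normed_algebra,banach} \<Rightarrow> 'b::banach \<Rightarrow> 'b"
    and e :: "'i \<Rightarrow> 'a"
  assumes bl: "banach_left_module act" and ne: "F \<noteq> bot" and eb: "\<And>i. norm (e i) \<le> C" and Cp: "C > 0"
    and lai: "\<And>a. ((\<lambda>i. e i * a) \<longlongrightarrow> a) F" and ess: "((\<lambda>i. act (e i) y) \<longlongrightarrow> y) F"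
  shows "\<exists>a x. y = act a x"
proof -
  have bb: "bounded_bilinear act" and assoc: "\<And>a c x. act (a * c) x = act a (act c x)"
    using bl unfolding banach_left_module_def by auto
  obtain K where Kp: "K > 0" and K: "\<And>a x. norm (act a x) \<le> norm a * norm x * K"
    using bounded_bilinear.pos_bounded[OF bb] by blast
  define c where "c = 1/(2*C*K+2)"
  have CK: "C*K > 0" using Cp Kp by simp
  have cp: "0 < c" and c1: "c < 1" unfolding c_def using CK by (auto simp: field_simps)
  have cCK: "c*C*K \<le> (1-c)/2" unfolding c_def using CK by (simp add: field_simps)
  define k where "k = 2/(1-c)"
  have kp: "k > 0" unfolding k_def using c1 by simp
  define U where "U E x = (1-c) *\<^sub>R x + c *\<^sub>R act E x" for E x
  have Ulin: "U E (x - z) = U E x - U E z" "U E (x + z) = U E x + U E z" "U E (r *\<^sub>R x) = r *\<^sub>R U E x" for E x z r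
    unfolding U_def by (simp_all add: bounded_bilinear.diff_right[OF bb] bounded_bilinear.add_right[OF bb]
        bounded_bilinear.scaleR_right[OF bb] algebra_simps)
  have actb: "norm E \<le> C \<Longrightarrow> norm (act E x) \<le> C*K*norm x" for E x
  proof -
    assume "norm E \<le> C"
    hence "norm E * norm x * K \<le> C * norm x * K" using Kp by (intro mult_right_mono) (auto intro: mult_right_mono)
    thus ?thesis using K[of E x] by (simp add: algebra_simps)
  qed
  have Ubound: "norm E \<le> C \<Longrightarrow> norm x \<le> k * norm (U E x)" for E x
  proof -
    assume E: "norm E \<le> C"
    have "norm ((1-c) *\<^sub>R x) \<le> norm (U E x) + norm (c *\<^sub>R act E x)"
      unfolding U_def using norm_triangle_ineq4[of "U E x" "c *\<^sub>R act E x"] by (simp add: U_def)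
    hence "(1-c)*norm x \<le> norm (U E x) + c * norm (act E x)" using c1 cp by simp
    moreover have "c * norm (act E x) \<le> c*(C*K*norm x)" using actb[OF E] cp by (intro mult_left_mono) auto
    moreover have "c*(C*K*norm x) \<le> ((1-c)/2) * norm x" using mult_right_mono[OF cCK norm_ge_zero[of x]] by (simp add: algebra_simps)
    ultimately have "((1-c)/2) * norm x \<le> norm (U E x)" by (simp add: algebra_simps)
    thus ?thesis unfolding k_def using c1 by (simp add: field_simps)
  qed
  have Uinj: "norm E \<le> C \<Longrightarrow> U E p = U E q \<Longrightarrow> p = q" for E p q
    using Ubound[of E "p - q"] kp by (simp add: Ulin)
  have Usurj: "norm E \<le> C \<Longrightarrow> \<exists>x. U E x = z" for E z
  proof -
    assume E: "norm E \<le> C"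
    define \<Phi> where "\<Phi> x = (1/(1-c)) *\<^sub>R (z - c *\<^sub>R act E x)" for x
    have "\<exists>!x. \<Phi> x = x"
    proof (rule banach_fix_type[where c="1/2"])
      show "\<forall>x y. dist (\<Phi> x) (\<Phi> y) \<le> 1/2 * dist x y"
      proof (intro allI)
        fix x y
        have "\<Phi> x - \<Phi> y = (c/(1-c)) *\<^sub>R act E (y - x)"
          unfolding \<Phi>_def by (simp add: bounded_bilinear.diff_right[OF bb] algebra_simps divide_inverse)
        hence "dist (\<Phi> x) (\<Phi> y) = (c/(1-c)) * norm (act E (y - x))"
          using cp c1 by (simp add: dist_norm)
        also have "\<dots> \<le> (c/(1-c)) * (C*K*norm (y - x))" using actb[OF E] cp c1 by (intro mult_left_mono) auto
        also have "\<dots> = (c*C*K/(1-c)) * dist x y" by (simp add: dist_norm norm_minus_commute)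
        also have "\<dots> \<le> 1/2 * dist x y"
          using cCK c1 by (intro mult_right_mono) (auto simp: field_simps)
        finally show "dist (\<Phi> x) (\<Phi> y) \<le> 1/2 * dist x y" .
      qed
    qed auto
    then obtain x where "\<Phi> x = x" by auto
    hence "(1-c) *\<^sub>R \<Phi> x = (1-c) *\<^sub>R x" by simp
    hence "z - c *\<^sub>R act E x = (1-c) *\<^sub>R x" unfolding \<Phi>_def using c1 by simp
    hence "U E x = z" unfolding U_def by (simp add: algebra_simps)
    thus ?thesis by blast
  qed
  define V where "V E z = (SOME x. U E x = z)" for E z
  have UV: "norm E \<le> C \<Longrightarrow> U E (V E z) = z" for E z
  proof -
    assume E: "norm E \<le> C"
    from Usurj[OF E, of z] show ?thesis unfolding V_def by (rule someI_ex)
  qed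
  have VU: "norm E \<le> C \<Longrightarrow> V E (U E x) = x" for E x
  proof -
    assume E: "norm E \<le> C"
    show ?thesis by (rule Uinj[OF E UV[OF E]])
  qed
  have Vbl: "norm E \<le> C \<Longrightarrow> bounded_linear (V E)" for E
  proof -
    assume E: "norm E \<le> C"
    show ?thesis
    proof (rule bounded_linear_intro[where K=k])
      fix x z show "V E (x + z) = V E x + V E z"
        by (rule Uinj[OF E]) (simp add: UV[OF E] Ulin(2))
    next
      fix r x show "V E (r *\<^sub>R x) = r *\<^sub>R V E x"
        by (rule Uinj[OF E]) (simp add: UV[OF E] Ulin(3))
    next
      fix x show "norm (V E x) \<le> norm x * k"
        using Ubound[OF E, of "V E x"] UV[OF E] by (simp add: mult.commute)
    qed
  qed
  have Vnorm: "norm E \<le> C \<Longrightarrow> norm (V E z) \<le> k * norm z" for E z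
    using Ubound[of E "V E z"] UV[of E z] by simp
  define good where "good n b i \<longleftrightarrow> norm (e i * b - b) \<le> (1/2)^n \<and> norm (act (e i) y - y) \<le> (1/2)^n / k^(n+1)"
    for n b i
  have exgood: "\<exists>i. good n b i" for n b
  proof -
    have p1: "(1/2::real)^n > 0" by simp
    have p2: "(1/2::real)^n / k^(n+1) > 0" using kp by simp
    have "eventually (\<lambda>i. dist (e i * b) b < (1/2)^n) F" using tendsto_iff[THEN iffD1, OF lai[of b], rule_format, OF p1] .
    moreover have "eventually (\<lambda>i. dist (act (e i) y) y < (1/2)^n / k^(n+1)) F"
      using tendsto_iff[THEN iffD1, OF ess, rule_format, OF p2] .
    ultimately have "eventually (\<lambda>i. good n b i) F"
      unfolding good_def by eventually_elim (auto simp: dist_norm)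
    thus ?thesis using eventually_happens ne by blast
  qed
  define ch where "ch n b = e (SOME i. good n b i)" for n b
  have chg: "norm (ch n b * b - b) \<le> (1/2)^n" "norm (act (ch n b) y - y) \<le> (1/2)^n / k^(n+1)"
    "norm (ch n b) \<le> C" for n b
  proof -
    have "good n b (SOME i. good n b i)" using exgood by (metis someI_ex)
    thus "norm (ch n b * b - b) \<le> (1/2)^n" "norm (act (ch n b) y - y) \<le> (1/2)^n / k^(n+1)"
      unfolding ch_def good_def by auto
    show "norm (ch n b) \<le> C" unfolding ch_def using eb by simp
  qed
  define b where "b = bseq ch c"
  define E where "E n = ch n (b n)" for n
  have EC: "norm (E n) \<le> C" for n unfolding E_def using chg(3) .
  define W where "W n = V (E n)" for n
  define Q where "Q = Qseq W"
  define P where "P n x = (1-c)^n *\<^sub>R x + act (b n) x" for n x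
  have bSuc: "b (Suc n) = (1-c) *\<^sub>R b n + (c*(1-c)^n) *\<^sub>R E n + c *\<^sub>R (E n * b n)" for n
    unfolding b_def E_def by simp
  have actbS: "act (b (Suc n)) x = (1-c) *\<^sub>R act (b n) x + (c*(1-c)^n) *\<^sub>R act (E n) x + c *\<^sub>R act (E n) (act (b n) x)" for n x
    unfolding bSuc by (simp only: bounded_bilinear.add_left[OF bb] bounded_bilinear.scaleR_left[OF bb] assoc)
  have Pstep: "P (Suc n) x = U (E n) (P n x)" for n x
    unfolding P_def U_def actbS
    by (simp add: bounded_bilinear.add_right[OF bb] bounded_bilinear.scaleR_right[OF bb] algebra_simps)
  have PQ: "P n (Q n z) = z" for n z
  proof (induction n arbitrary: z)
    case 0 thus ?case unfolding P_def Q_def b_def by (simp add: bounded_bilinear.zero_left[OF bb])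
  next
    case (Suc n)
    have "P (Suc n) (Q (Suc n) z) = U (E n) (P n (Q n (W n z)))" unfolding Q_def by (simp add: Pstep)
    also have "\<dots> = z" using Suc UV[OF EC] unfolding W_def by simp
    finally show ?case .
  qed
  have Qbl: "bounded_linear (Q n) \<and> (\<forall>z. norm (Q n z) \<le> k^n * norm z)" for n
  proof (induction n)
    case 0 thus ?case unfolding Q_def by (simp add: bounded_linear_ident)
  next
    case (Suc n)
    have "bounded_linear (\<lambda>z. Q n (W n z))"
      using Suc Vbl[OF EC] unfolding W_def by (auto intro: bounded_linear_compose)
    moreover have "norm (Q n (W n z)) \<le> k^(Suc n) * norm z" for z
    proof -
      have "norm (Q n (W n z)) \<le> k^n * norm (W n z)" using Suc by blast
      also have "\<dots> \<le> k^n * (k * norm z)" unfolding W_def using Vnorm[OF EC] kp by (intro mult_left_mono) auto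
      finally show ?thesis by (simp add: algebra_simps)
    qed
    ultimately show ?case unfolding Q_def by simp
  qed
  define ys where "ys n = Q n y" for n
  have ydiff: "norm (ys (Suc n) - ys n) \<le> (1/2)^n" for n
  proof -
    have "ys (Suc n) - ys n = Q n (W n y - y)"
      unfolding ys_def using Qbl[of n] by (simp add: Q_def linear_diff bounded_linear.linear)
    also have "W n y - y = W n (c *\<^sub>R (y - act (E n) y))"
    proof -
      have "W n y - y = W n y - W n (U (E n) y)" unfolding W_def using VU[OF EC] by simp
      also have "\<dots> = W n (y - U (E n) y)" unfolding W_def using Vbl[OF EC] by (simp add: linear_diff bounded_linear.linear)
      also have "y - U (E n) y = c *\<^sub>R (y - act (E n) y)" unfolding U_def by (simp add: algebra_simps)
      finally show ?thesis .
    qed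
    finally have "norm (ys (Suc n) - ys n) \<le> k^n * norm (W n (c *\<^sub>R (y - act (E n) y)))"
      using Qbl[of n] by simp
    also have "\<dots> \<le> k^n * (k * norm (c *\<^sub>R (y - act (E n) y)))"
      unfolding W_def using mult_left_mono[OF Vnorm[OF EC, of n "c *\<^sub>R (y - act (E n) y)"], of "k^n"] kp by simp
    also have "norm (c *\<^sub>R (y - act (E n) y)) \<le> norm (act (E n) y - y)"
      using cp c1 by (simp add: norm_minus_commute mult_left_le_one_le)
    hence "k^n * (k * norm (c *\<^sub>R (y - act (E n) y))) \<le> k^n * (k * ((1/2)^n / k^(n+1)))"
      using chg(2)[of n "b n"] kp unfolding E_def by (intro mult_left_mono) auto
    also have "k^n * (k * ((1/2)^n / k^(n+1))) = (1/2)^n" using kp by (simp add: field_simps)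
    finally show ?thesis .
  qed
  have "convergent ys"
    by (rule conv_of_diffs[where g="\<lambda>n. (1/2::real)^n", OF ydiff]) (simp add: summable_geometric)
  then obtain x where yx: "ys \<longlonglongrightarrow> x" unfolding convergent_def by blast
  have bdiff: "norm (b (Suc n) - b n) \<le> (1/2)^n + (1-c)^n * C" for n
  proof -
    have "b (Suc n) - b n = c *\<^sub>R (E n * b n - b n) + (c*(1-c)^n) *\<^sub>R E n"
      by (simp add: bSuc algebra_simps)
    hence "norm (b (Suc n) - b n) \<le> c * norm (E n * b n - b n) + c*(1-c)^n * norm (E n)"
      using cp c1 norm_triangle_ineq[of "c *\<^sub>R (E n * b n - b n)" "(c*(1-c)^n) *\<^sub>R E n"] by simp
    also have "\<dots> \<le> 1 * (1/2)^n + 1 * (1-c)^n * C"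
    proof (intro add_mono mult_mono)
      show "norm (E n * b n - b n) \<le> (1/2)^n" using chg(1) unfolding E_def .
      show "norm (E n) \<le> C" by (rule EC)
    qed (use cp c1 in auto)
    finally show ?thesis by simp
  qed
  have "convergent b"
  proof (rule conv_of_diffs[where g="\<lambda>n. (1/2::real)^n + (1-c)^n * C", OF bdiff])
    have s1: "summable (\<lambda>n. (1/2::real)^n)" by (rule summable_geometric) simp
    have s2: "summable (\<lambda>n. (1-c)^n)" by (rule summable_geometric) (use cp c1 in simp)
    show "summable (\<lambda>n. (1/2::real)^n + (1-c)^n * C)"
      by (rule summable_add[OF s1 summable_mult2[OF s2]])
  qed
  then obtain a where ba: "b \<longlonglongrightarrow> a" unfolding convergent_def by blast
  have pz: "(\<lambda>n. (1-c)^n) \<longlonglongrightarrow> (0::real)" by (rule LIMSEQ_power_zero) (use cp c1 in simp)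
  have t1: "(\<lambda>n. (1-c)^n *\<^sub>R ys n) \<longlonglongrightarrow> 0 *\<^sub>R x" by (rule tendsto_scaleR[OF pz yx])
  have t2: "(\<lambda>n. act (b n) (ys n)) \<longlonglongrightarrow> act a x" by (rule bounded_bilinear.tendsto[OF bb ba yx])
  have "(\<lambda>n. P n (ys n)) \<longlonglongrightarrow> 0 *\<^sub>R x + act a x"
    unfolding P_def by (rule tendsto_add[OF t1 t2])
  moreover have "(\<lambda>n. P n (ys n)) = (\<lambda>n. y)" unfolding ys_def using PQ by simp
  ultimately have "(\<lambda>n. y) \<longlonglongrightarrow> act a x" by simp
  hence "y = act a x" by (rule LIMSEQ_unique[OF tendsto_const])
  thus ?thesis by blast
qed



theorem mainTheorem16:
  fixes act :: "'a::{real_normed_algebra,banach} \<Rightarrow> 'b::banach \<Rightarrow> 'b"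
    and e :: "'i \<Rightarrow> 'a" and F :: "'i filter"
    and e'' :: "('a \<Rightarrow>\<^sub>L real) \<Rightarrow>\<^sub>L real"
  assumes "banach_left_module act"
    and "bounded_left_approx_identity e F"
    and "weak_star_conv_bidual e e'' F"
    and "\<forall>F''. arens3 ((*) :: 'a \<Rightarrow> 'a \<Rightarrow> 'a) e'' F'' = F''"
    and "Zt act e'' = UNIV"
  shows "(\<forall>b. \<exists>a x. b = act a x) \<longleftrightarrow> (\<forall>b''. arens3 act e'' b'' = b'')"
proof -
  have bb: "bounded_bilinear act" and assoc: "\<And>a c x. act (a * c) x = act a (act c x)"
    using assms(1) unfolding banach_left_module_def by auto
  have bbt: "bounded_bilinear (transp_bil act)"
    unfolding transp_bil_def[abs_def] by (rule bounded_bilinear.flip[OF bb])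
  have ne: "F \<noteq> bot" and lai: "\<And>a. ((\<lambda>i. e i * a) \<longlongrightarrow> a) F"
    using assms(2) unfolding bounded_left_approx_identity_def by auto
  obtain M0 where M0: "\<And>i. norm (e i) \<le> M0"
    using assms(2) unfolding bounded_left_approx_identity_def by auto
  define C where "C = max M0 1"
  have eb: "\<And>i. norm (e i) \<le> C" and Cp: "C > 0" unfolding C_def using M0 by (auto intro: le_max_iff_disj[THEN iffD2])
  have ws: "\<And>f. ((\<lambda>i. blinfun_apply f (e i)) \<longlongrightarrow> blinfun_apply e'' f) F"
    using assms(3) unfolding weak_star_conv_bidual_def by auto
  have zt: "arens3 (transp_bil act) b'' e'' = arens3 act e'' b''" for b''
    using assms(5) unfolding Zt_def arens3t_def by blast
  have a1t: "blinfun_apply (arens1 (transp_bil act) z' y) a = blinfun_apply z' (act a y)" for z' y a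
    by (simp add: ap1[OF bbt] transp_bil_def)
  have wk: "((\<lambda>i. blinfun_apply z' (act (e i) y)) \<longlongrightarrow> blinfun_apply e'' (arens1 (transp_bil act) z' y)) F" for z' y
    using ws[of "arens1 (transp_bil act) z' y"] by (simp add: a1t)
  have prodlim: "((\<lambda>i. act (e i) (act a x)) \<longlongrightarrow> act a x) F" for a x
  proof -
    have "((\<lambda>i. act (e i * a) x) \<longlongrightarrow> act a x) F"
      by (rule bounded_bilinear.tendsto[OF bb lai tendsto_const])
    thus ?thesis by (simp add: assoc)
  qed
  show ?thesis
  proof
    assume fac: "\<forall>b. \<exists>a x. b = act a x"
    have a2: "arens2 (transp_bil act) e'' z' = z'" for z'
    proof (rule blinfun_eqI)
      fix y
      obtain a x where y: "y = act a x" using fac by blast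
      have "((\<lambda>i. blinfun_apply z' (act (e i) y)) \<longlongrightarrow> blinfun_apply z' y) F"
        unfolding y by (rule bounded_linear.tendsto[OF blinfun.bounded_linear_right prodlim])
      from tendsto_unique[OF ne wk this]
      show "blinfun_apply (arens2 (transp_bil act) e'' z') y = blinfun_apply z' y"
        by (simp add: ap2[OF bbt])
    qed
    show "\<forall>b''. arens3 act e'' b'' = b''"
    proof
      fix b''
      show "arens3 act e'' b'' = b''"
        unfolding zt[symmetric] by (rule blinfun_eqI) (simp add: ap3[OF bbt] a2)
    qed
  next
    assume H: "\<forall>b''. arens3 act e'' b'' = b''"
    have weak: "((\<lambda>i. blinfun_apply z' (act (e i) y)) \<longlongrightarrow> blinfun_apply z' y) F" for z' :: "'b \<Rightarrow>\<^sub>L real" and y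
    proof -
      define J :: "('b \<Rightarrow>\<^sub>L real) \<Rightarrow>\<^sub>L real" where "J = Blinfun (\<lambda>w'. blinfun_apply w' y)"
      have Jap: "blinfun_apply J w' = blinfun_apply w' y" for w'
        unfolding J_def by (simp add: bounded_linear_Blinfun_apply[OF blinfun.bounded_linear_left])
      have "arens3 (transp_bil act) J e'' = J" using H zt by simp
      hence "blinfun_apply (arens3 (transp_bil act) J e'') z' = blinfun_apply J z'" by simp
      hence "blinfun_apply e'' (arens1 (transp_bil act) z' y) = blinfun_apply z' y"
        by (simp add: ap3[OF bbt] ap2[OF bbt] Jap)
      thus ?thesis using wk[of z' y] by simp
    qed
    define S where "S = {act a x | a x. True}"
    have incl: "y \<in> closure (span S)" for y
    proof (rule ccontr)
      assume "y \<notin> closure (span S)"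
      from hb_sep[OF subspace_span this] obtain f :: "'b \<Rightarrow> real"
        where f: "bounded_linear f" "\<forall>m\<in>span S. f m = 0" "f y \<noteq> 0" by blast
      have fap: "blinfun_apply (Blinfun f) = f" by (rule bounded_linear_Blinfun_apply[OF f(1)])
      have "((\<lambda>i. f (act (e i) y)) \<longlongrightarrow> f y) F" using weak[of "Blinfun f" y] by (simp add: fap)
      moreover have "f (act (e i) y) = 0" for i
      proof -
        have mem: "act (e i) y \<in> S" unfolding S_def by auto
        show ?thesis by (rule f(2)[rule_format, OF subsetD[OF span_superset mem]])
      qed
      ultimately have "((\<lambda>i. 0) \<longlongrightarrow> f y) F" by simp
      hence "0 = f y" by (rule tendsto_unique[OF ne tendsto_const])
      hence "f y = 0" by simp
      thus False using f(3) by simp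
    qed
    have spanlim: "((\<lambda>i. act (e i) z) \<longlongrightarrow> z) F" if "z \<in> span S" for z
    proof (rule span_induct[OF that, where P="\<lambda>z. ((\<lambda>i. act (e i) z) \<longlongrightarrow> z) F"])
      show "subspace {z. ((\<lambda>i. act (e i) z) \<longlongrightarrow> z) F}"
        unfolding subspace_def
      proof (intro conjI ballI allI)
        show "0 \<in> {z. ((\<lambda>i. act (e i) z) \<longlongrightarrow> z) F}" by (simp add: bounded_bilinear.zero_right[OF bb])
      next
        fix x z assume "x \<in> {z. ((\<lambda>i. act (e i) z) \<longlongrightarrow> z) F}" "z \<in> {z. ((\<lambda>i. act (e i) z) \<longlongrightarrow> z) F}"
        hence "((\<lambda>i. act (e i) x + act (e i) z) \<longlongrightarrow> x + z) F" by (intro tendsto_add) auto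
        thus "x + z \<in> {z. ((\<lambda>i. act (e i) z) \<longlongrightarrow> z) F}" by (simp add: bounded_bilinear.add_right[OF bb])
      next
        fix r x assume "x \<in> {z. ((\<lambda>i. act (e i) z) \<longlongrightarrow> z) F}"
        hence "((\<lambda>i. r *\<^sub>R act (e i) x) \<longlongrightarrow> r *\<^sub>R x) F" by (intro tendsto_scaleR tendsto_const) auto
        thus "r *\<^sub>R x \<in> {z. ((\<lambda>i. act (e i) z) \<longlongrightarrow> z) F}" by (simp add: bounded_bilinear.scaleR_right[OF bb])
      qed
    next
      fix z assume "z \<in> S"
      then obtain a x where "z = act a x" unfolding S_def by blast
      thus "((\<lambda>i. act (e i) z) \<longlongrightarrow> z) F" using prodlim by simp
    qed
    obtain K where Kp: "K > 0" and K: "\<And>a x. norm (act a x) \<le> norm a * norm x * K"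
      using bounded_bilinear.pos_bounded[OF bb] by blast
    have ess: "((\<lambda>i. act (e i) y) \<longlongrightarrow> y) F" for y
    proof (unfold tendsto_iff, intro allI impI)
      fix \<epsilon> :: real assume ep: "\<epsilon> > 0"
      define \<delta> where "\<delta> = \<epsilon> / (2*(C*K+1))"
      have CK: "C*K > 0" using Cp Kp by simp
      have dp: "\<delta> > 0" unfolding \<delta>_def using ep CK by simp
      have "\<forall>\<epsilon>>0. \<exists>s\<in>span S. dist s y < \<epsilon>" using incl[of y] by (simp only: closure_approachable)
      then obtain s where s: "s \<in> span S" "dist s y < \<delta>" using dp by blast
      have "eventually (\<lambda>i. dist (act (e i) s) s < \<epsilon>/2) F"
        using tendsto_iff[THEN iffD1, OF spanlim[OF s(1)], rule_format, of "\<epsilon>/2"] ep by simp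
      thus "eventually (\<lambda>i. dist (act (e i) y) y < \<epsilon>) F"
      proof eventually_elim
        case (elim i)
        have "act (e i) y - y = act (e i) (y - s) + (act (e i) s - s) + (s - y)"
          by (simp add: bounded_bilinear.diff_right[OF bb] algebra_simps)
        hence "norm (act (e i) y - y) \<le> norm (act (e i) (y - s)) + norm (act (e i) s - s) + norm (s - y)"
          using norm_triangle_ineq[of "act (e i) (y - s) + (act (e i) s - s)" "s - y"]
            norm_triangle_ineq[of "act (e i) (y - s)" "act (e i) s - s"] by simp
        also have "norm (act (e i) (y - s)) \<le> C*K*\<delta>"
        proof -
          have "norm (act (e i) (y - s)) \<le> norm (e i) * norm (y - s) * K" by (rule K)
          also have "\<dots> \<le> C * \<delta> * K"
          proof (rule mult_right_mono[OF mult_mono])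
            show "norm (y - s) \<le> \<delta>" using s(2) by (simp add: dist_norm norm_minus_commute)
          qed (use eb[of i] Cp Kp in auto)
          finally show ?thesis by (simp add: algebra_simps)
        qed
        hence "norm (act (e i) (y - s)) + norm (act (e i) s - s) + norm (s - y) < C*K*\<delta> + \<epsilon>/2 + \<delta>"
          using elim s(2) by (simp add: dist_norm)
        also have "C*K*\<delta> + \<epsilon>/2 + \<delta> = \<epsilon>"
        proof -
          have nz: "C*K+1 \<noteq> 0" using CK by simp
          have "(C*K+1)*\<delta> = \<epsilon>/2" unfolding \<delta>_def using nz by (simp add: field_simps)
          thus ?thesis by (simp add: algebra_simps)
        qed
        finally show ?case by (simp add: dist_norm)
      qed
    qed
    show "\<forall>b. \<exists>a x. b = act a x"
      using cohen[OF assms(1) ne eb Cp lai ess] by blast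
  qed
qed

end
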